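(* Let $T>0$, let $(\pi_n)$ be a sequence of regular partitions of $[0,T]$ ($t^n_k=kT/N_n$, $(N_n)$ strictly increasing), and let $X=\{X(t)\colon t\in[0,T]\}$ be a second order process satisfying (C1) for some $\gamma\in(0,1)$. Assume there exist $\varphi\in\Psi$ and a continuous bounded function $g_0\colon(0,T)\to\mathbb R$ such that $$\lim_{h\to0+}\sup_{\varphi(h)\le t\le T-h}\Big|\frac{\mathbb{E}(X_{t+h}-2X_t+X_{t-h})^2}{h^{2\gamma}}-g_0(t)\Big|=0.$$ Then $\mathbb{E}V^{(2)}_{N_n}(X,2)\to\int_0^Tg_0(t)\,dt$ as $n\to\infty$, where $V^{(2)}_{N_n}(X,2)=(T^{-1}N_n)^{2\gamma-1}\sum_{k=1}^{N_n-1}\big(X(t^n_{k+1})-2X(t^n_k)+X(t^n_{k-1})\big)^2$.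
   Context: $\sigma_X^2(s,t)=\mathbb{E}[X(t)-X(s)]^2$. (C1): $\sigma_X(0,\delta)=O(\delta^\gamma)$ as $\delta\downarrow0$. $\Psi$ is the class of continuous $\varphi\colon(0,T]\to[0,\infty)$ with $\varphi(h)\to0$, $L(h):=\varphi(h)/h\to\infty$, $hL(h)^3\to0$ as $h\downarrow0$. *)

theory Defs
  imports "HOL-Probability.Probability" "HOL-Library.Landau_Symbols"
begin

definition second_order_process :: "'a measure \<Rightarrow> real \<Rightarrow> (real \<Rightarrow> 'a \<Rightarrow> real) \<Rightarrow> bool" where
  "second_order_process M T X \<longleftrightarrow>
     (\<forall>t\<in>{0..T}. X t \<in> borel_measurable M \<and> integrable M (\<lambda>\<omega>. (X t \<omega>)\<^sup>2))"

definition sigma_X :: "'a measure \<Rightarrow> (real \<Rightarrow> 'a \<Rightarrow> real) \<Rightarrow> real \<Rightarrow> real \<Rightarrow> real" where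
  "sigma_X M X s t = sqrt (\<integral>\<omega>. (X t \<omega> - X s \<omega>)\<^sup>2 \<partial>M)"

definition cond_C1 :: "'a measure \<Rightarrow> (real \<Rightarrow> 'a \<Rightarrow> real) \<Rightarrow> real \<Rightarrow> bool" where
  "cond_C1 M X \<gamma> \<longleftrightarrow> (\<lambda>\<delta>. sigma_X M X 0 \<delta>) \<in> O[at_right 0](\<lambda>\<delta>. \<delta> powr \<gamma>)"

definition Psi :: "real \<Rightarrow> (real \<Rightarrow> real) set" where
  "Psi T = {\<phi>. continuous_on {0<..T} \<phi> \<and> (\<forall>h\<in>{0<..T}. 0 \<le> \<phi> h)
      \<and> (\<phi> \<longlongrightarrow> 0) (at_right 0)
      \<and> filterlim (\<lambda>h. \<phi> h / h) at_top (at_right 0)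
      \<and> ((\<lambda>h. h * (\<phi> h / h) ^ 3) \<longlongrightarrow> 0) (at_right 0)}"

definition V2 :: "real \<Rightarrow> real \<Rightarrow> nat \<Rightarrow> (real \<Rightarrow> 'a \<Rightarrow> real) \<Rightarrow> 'a \<Rightarrow> real" where
  "V2 \<gamma> T N X \<omega> = (real N / T) powr (2 * \<gamma> - 1) *
     (\<Sum>k = 1..N - 1. (X (real (k + 1) * T / real N) \<omega> - 2 * X (real k * T / real N) \<omega>
                        + X (real (k - 1) * T / real N) \<omega>)\<^sup>2)"

end

theory Submission
  imports Defs
begin


lemma sq3_le: "((u::real) + v + w)\<^sup>2 \<le> 3 * (u\<^sup>2 + v\<^sup>2 + w\<^sup>2)"
proof -
  have "0 \<le> (u - v)\<^sup>2 + (v - w)\<^sup>2 + (u - w)\<^sup>2" by simp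
  then show ?thesis by (simp add: power2_eq_square algebra_simps)
qed

lemma int_sq_sum3:
  fixes f g k :: "'a \<Rightarrow> real"
  assumes m: "f \<in> borel_measurable M" "g \<in> borel_measurable M" "k \<in> borel_measurable M"
    and i: "integrable M (\<lambda>\<omega>. (f \<omega>)\<^sup>2)" "integrable M (\<lambda>\<omega>. (g \<omega>)\<^sup>2)" "integrable M (\<lambda>\<omega>. (k \<omega>)\<^sup>2)"
  shows "integrable M (\<lambda>\<omega>. (f \<omega> + g \<omega> + k \<omega>)\<^sup>2)"
    and "(\<integral>\<omega>. (f \<omega> + g \<omega> + k \<omega>)\<^sup>2 \<partial>M) \<le>
           3 * ((\<integral>\<omega>. (f \<omega>)\<^sup>2 \<partial>M) + (\<integral>\<omega>. (g \<omega>)\<^sup>2 \<partial>M) + (\<integral>\<omega>. (k \<omega>)\<^sup>2 \<partial>M))"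
proof -
  have ib: "integrable M (\<lambda>\<omega>. 3 * ((f \<omega>)\<^sup>2 + (g \<omega>)\<^sup>2 + (k \<omega>)\<^sup>2))"
    using i by auto
  show I: "integrable M (\<lambda>\<omega>. (f \<omega> + g \<omega> + k \<omega>)\<^sup>2)"
    by (rule Bochner_Integration.integrable_bound[OF ib]) (use m sq3_le in auto)
  have "(\<integral>\<omega>. (f \<omega> + g \<omega> + k \<omega>)\<^sup>2 \<partial>M) \<le> (\<integral>\<omega>. 3 * ((f \<omega>)\<^sup>2 + (g \<omega>)\<^sup>2 + (k \<omega>)\<^sup>2) \<partial>M)"
    by (rule integral_mono[OF I ib sq3_le])
  also have "\<dots> = 3 * ((\<integral>\<omega>. (f \<omega>)\<^sup>2 \<partial>M) + (\<integral>\<omega>. (g \<omega>)\<^sup>2 \<partial>M) + (\<integral>\<omega>. (k \<omega>)\<^sup>2 \<partial>M))"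
    using i by simp
  finally show "(\<integral>\<omega>. (f \<omega> + g \<omega> + k \<omega>)\<^sup>2 \<partial>M) \<le>
           3 * ((\<integral>\<omega>. (f \<omega>)\<^sup>2 \<partial>M) + (\<integral>\<omega>. (g \<omega>)\<^sup>2 \<partial>M) + (\<integral>\<omega>. (k \<omega>)\<^sup>2 \<partial>M))" .
qed

lemma delta_facts:
  fixes X :: "real \<Rightarrow> 'a \<Rightarrow> real"
  assumes Xm: "\<And>s. s \<in> {0..T} \<Longrightarrow> X s \<in> borel_measurable M"
    and Xi: "\<And>s. s \<in> {0..T} \<Longrightarrow> integrable M (\<lambda>\<omega>. (X s \<omega>)\<^sup>2)"
    and abc: "a \<in> {0..T}" "b \<in> {0..T}" "c \<in> {0..T}"
  shows "integrable M (\<lambda>\<omega>. (X a \<omega> - 2 * X b \<omega> + X c \<omega>)\<^sup>2)"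
    and "(\<integral>\<omega>. (X a \<omega> - 2 * X b \<omega> + X c \<omega>)\<^sup>2 \<partial>M) \<le>
       3 * ((\<integral>\<omega>. (X a \<omega> - X 0 \<omega>)\<^sup>2 \<partial>M) + 4 * (\<integral>\<omega>. (X b \<omega> - X 0 \<omega>)\<^sup>2 \<partial>M)
            + (\<integral>\<omega>. (X c \<omega> - X 0 \<omega>)\<^sup>2 \<partial>M))"
proof -
  have T0: "0 \<in> {0..T}" using abc by auto
  have z: "integrable M (\<lambda>\<omega>. ((\<lambda>_. 0::real) \<omega>)\<^sup>2)" by simp
  have neg: "integrable M (\<lambda>\<omega>. (- X s \<omega>)\<^sup>2)" if "s \<in> {0..T}" for s
    using Xi[OF that] by simp
  have d: "integrable M (\<lambda>\<omega>. (X s \<omega> - X 0 \<omega>)\<^sup>2)" "(\<lambda>\<omega>. X s \<omega> - X 0 \<omega>) \<in> borel_measurable M"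
    if "s \<in> {0..T}" for s
  proof -
    have "integrable M (\<lambda>\<omega>. (X s \<omega> + (- X 0 \<omega>) + 0)\<^sup>2)"
      using int_sq_sum3(1)[of "X s" M "\<lambda>\<omega>. - X 0 \<omega>" "\<lambda>_. 0", OF Xm[OF that] _ _ Xi[OF that] neg[OF T0] z]
        Xm[OF T0] by simp
    then show "integrable M (\<lambda>\<omega>. (X s \<omega> - X 0 \<omega>)\<^sup>2)" by simp
    show "(\<lambda>\<omega>. X s \<omega> - X 0 \<omega>) \<in> borel_measurable M" using Xm[OF that] Xm[OF T0] by simp
  qed
  have m2: "(\<lambda>\<omega>. -2 * (X b \<omega> - X 0 \<omega>)) \<in> borel_measurable M" by (rule borel_measurable_times[OF borel_measurable_const d(2)[OF abc(2)]])
  have i2: "integrable M (\<lambda>\<omega>. (-2 * (X b \<omega> - X 0 \<omega>))\<^sup>2)"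
  proof -
    have sq: "\<And>y::real. (-2 * y)\<^sup>2 = 4 * y\<^sup>2" by (simp add: power2_eq_square)
    show ?thesis unfolding sq by (rule integrable_mult_right[OF d(1)[OF abc(2)]])
  qed
  have eq: "(\<lambda>\<omega>. (X a \<omega> - 2 * X b \<omega> + X c \<omega>)\<^sup>2) =
     (\<lambda>\<omega>. ((X a \<omega> - X 0 \<omega>) + (-2 * (X b \<omega> - X 0 \<omega>)) + (X c \<omega> - X 0 \<omega>))\<^sup>2)"
    by (simp add: algebra_simps)
  note R = int_sq_sum3[of "\<lambda>\<omega>. X a \<omega> - X 0 \<omega>" M "\<lambda>\<omega>. -2 * (X b \<omega> - X 0 \<omega>)" "\<lambda>\<omega>. X c \<omega> - X 0 \<omega>",
      OF d(2)[OF abc(1)] m2 d(2)[OF abc(3)] d(1)[OF abc(1)] i2 d(1)[OF abc(3)]]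
  show "integrable M (\<lambda>\<omega>. (X a \<omega> - 2 * X b \<omega> + X c \<omega>)\<^sup>2)"
    unfolding eq by (rule R(1))
  have sq: "\<And>y::real. (-2 * y)\<^sup>2 = 4 * y\<^sup>2" by (simp add: power2_eq_square)
  have "(\<integral>\<omega>. (-2 * (X b \<omega> - X 0 \<omega>))\<^sup>2 \<partial>M) = 4 * (\<integral>\<omega>. (X b \<omega> - X 0 \<omega>)\<^sup>2 \<partial>M)"
    unfolding sq by (rule integral_mult_right_zero)
  then show "(\<integral>\<omega>. (X a \<omega> - 2 * X b \<omega> + X c \<omega>)\<^sup>2 \<partial>M) \<le>
       3 * ((\<integral>\<omega>. (X a \<omega> - X 0 \<omega>)\<^sup>2 \<partial>M) + 4 * (\<integral>\<omega>. (X b \<omega> - X 0 \<omega>)\<^sup>2 \<partial>M)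
            + (\<integral>\<omega>. (X c \<omega> - X 0 \<omega>)\<^sup>2 \<partial>M))"
    unfolding eq using R(2) by simp
qed


lemma ind_int:
  fixes a b :: real and S :: "real set"
  assumes "{a..<b} \<subseteq> S" "S \<in> sets lebesgue" "a \<le> b"
  shows "integral S (indicator {a..<b}) = b - a"
proof -
  have "{a..<b} \<inter> S = {a..<b}" using assms by auto
  moreover have "{a..<b} \<in> lmeasurable"
    by (intro bounded_set_imp_lmeasurable) auto
  ultimately have "integral S (indicator {a..<b}) = measure lebesgue {a..<b}"
    using integral_indicator by metis
  also have "\<dots> = measure lborel {a..<b}"
    by simp
  also have "\<dots> = b - a" using assms by simp
  finally show ?thesis .
qed

lemma ind_intble:
  fixes a b :: real and S :: "real set"
  assumes "{a..<b} \<subseteq> S"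
  shows "indicat_real {a..<b} integrable_on S"
proof -
  have "{a..<b} \<inter> S = {a..<b}" using assms by auto
  moreover have "{a..<b} \<in> lmeasurable"
    by (intro bounded_set_imp_lmeasurable) auto
  ultimately show ?thesis by (simp add: integrable_on_indicator)
qed

lemma ind_eval:
  fixes T x :: real and N k :: nat
  assumes "T > 0" "N > 0" "x \<ge> 0"
  shows "indicat_real {real k * T / real N..<real (k+1) * T / real N} x
     = (if k = nat \<lfloor>x * real N / T\<rfloor> then 1 else 0)"
proof -
  have NT: "real N / T > 0" using assms by auto
  have "x \<in> {real k * T / real N..<real (k+1) * T / real N} \<longleftrightarrow>
        real k \<le> x * real N / T \<and> x * real N / T < real k + 1"
    using assms by (auto simp: field_simps)
  also have "\<dots> \<longleftrightarrow> \<lfloor>x * real N / T\<rfloor> = int k"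
    by (simp add: floor_eq_iff)
  also have "\<dots> \<longleftrightarrow> k = nat \<lfloor>x * real N / T\<rfloor>"
    using assms by auto
  finally show ?thesis by (simp add: indicator_def)
qed

lemma riemann:
  fixes g :: "real \<Rightarrow> real" and N :: "nat \<Rightarrow> nat" and T B :: real
  assumes T: "T > 0" and N: "filterlim N at_top sequentially"
    and gc: "continuous_on {0<..<T} g" and gB: "\<And>t. t \<in> {0<..<T} \<Longrightarrow> \<bar>g t\<bar> \<le> B"
  shows "(\<lambda>n. \<Sum>k=1..N n - 1. T / real (N n) * g (real k * T / real (N n))) \<longlonglongrightarrow> integral {0..T} g"
proof -
  define f where "f n x = (\<Sum>k\<in>{1..N n - 1}. g (real k * T / real (N n)) *
      indicator {real k * T / real (N n)..<real (k+1) * T / real (N n)} x)" for n x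
  have B0: "B \<ge> 0" using gB[of "T/2"] T by auto
  have sub: "{real k * T / real (N n)..<real (k+1) * T / real (N n)} \<subseteq> {0<..<T}"
    if "k \<in> {1..N n - 1}" for n k
  proof -
    from that have k: "1 \<le> k" "k+1 \<le> N n" by auto
    hence Npos: "real (N n) > 0" by auto
    have "0 < real k * T / real (N n)" using k T Npos by auto
    moreover have "real (k+1) * T \<le> real (N n) * T"
      using k T by (intro mult_right_mono) auto
    hence "real (k+1) * T / real (N n) \<le> T" using Npos by (simp add: field_simps)
    ultimately show ?thesis by auto
  qed
  have len: "real (k+1) * T / real (N n) - real k * T / real (N n) = T / real (N n)" for k n
    by (simp add: add_divide_distrib distrib_right)
  have kint: "(\<lambda>x. g (real k * T / real (N n)) *
      indicator {real k * T / real (N n)..<real (k+1) * T / real (N n)} x) integrable_on {0<..<T}"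
    if "k \<in> {1..N n - 1}" for n k
    by (rule integrable_on_mult_right, rule ind_intble, rule sub[OF that])
  have fint: "integral {0<..<T} (f n) = (\<Sum>k=1..N n - 1. T / real (N n) * g (real k * T / real (N n)))" for n
  proof -
    have "integral {0<..<T} (f n) = (\<Sum>k\<in>{1..N n - 1}. integral {0<..<T} (\<lambda>x. g (real k * T / real (N n)) *
      indicator {real k * T / real (N n)..<real (k+1) * T / real (N n)} x))"
      unfolding f_def by (rule integral_sum[OF finite_atLeastAtMost kint])
    also have "\<dots> = (\<Sum>k=1..N n - 1. T / real (N n) * g (real k * T / real (N n)))"
    proof (rule sum.cong[OF refl])
      fix k assume k: "k \<in> {1..N n - 1}"
      have le: "real k * T / real (N n) \<le> real (k+1) * T / real (N n)"
        using T by (intro divide_right_mono mult_right_mono) auto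
      show "integral {0<..<T} (\<lambda>x. g (real k * T / real (N n)) *
        indicator {real k * T / real (N n)..<real (k+1) * T / real (N n)} x) = T / real (N n) * g (real k * T / real (N n))"
        (is "?L = ?R")
      proof -
        have "?L = g (real k * T / real (N n)) * (real (k+1) * T / real (N n) - real k * T / real (N n))"
          by (subst integral_mult_right, subst ind_int[OF sub[OF k] _ le]) simp_all
        also have "\<dots> = ?R" unfolding len by (rule mult.commute)
        finally show ?thesis .
      qed
    qed
    finally show ?thesis .
  qed
  have fintble: "f n integrable_on {0<..<T}" for n
    unfolding f_def by (rule integrable_sum[OF finite_atLeastAtMost kint])
  have feval: "f n x = (if nat \<lfloor>x * real (N n) / T\<rfloor> \<in> {1..N n - 1}
      then g (real (nat \<lfloor>x * real (N n) / T\<rfloor>) * T / real (N n)) else 0)"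
    if x: "x \<in> {0<..<T}" for n x
  proof (cases "N n = 0")
    case True then show ?thesis by (simp add: f_def)
  next
    case False
    have ie: "\<And>k. indicat_real {real k * T / real (N n)..<real (k+1) * T / real (N n)} x
       = (if k = nat \<lfloor>x * real (N n) / T\<rfloor> then 1 else 0)"
      by (rule ind_eval) (use x T False in auto)
    have "f n x = (\<Sum>k\<in>{1..N n - 1}. g (real k * T / real (N n)) * (if k = nat \<lfloor>x * real (N n) / T\<rfloor> then 1 else 0))"
      unfolding f_def ie ..
    also have "\<dots> = (\<Sum>k\<in>{1..N n - 1}. if k = nat \<lfloor>x * real (N n) / T\<rfloor> then g (real k * T / real (N n)) else 0)"
      by (rule sum.cong) auto
    finally show ?thesis by (simp only: sum.delta finite_atLeastAtMost)
  qed
  have fle: "norm (f n x) \<le> B" if x: "x \<in> {0<..<T}" for n x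
  proof (cases "nat \<lfloor>x * real (N n) / T\<rfloor> \<in> {1..N n - 1}")
    case True
    define m where "m = nat \<lfloor>x * real (N n) / T\<rfloor>"
    have mI: "m \<in> {1..N n - 1}" using True m_def by simp
    then have Np: "real (N n) > 0" by auto
    have "real m * T < real (m+1) * T" using T by simp
    then have "real m * T / real (N n) < real (m+1) * T / real (N n)"
      using Np by (simp add: divide_strict_right_mono)
    then have "real m * T / real (N n) \<in> {real m * T / real (N n)..<real (m+1) * T / real (N n)}"
      by simp
    then have "real (nat \<lfloor>x * real (N n) / T\<rfloor>) * T / real (N n) \<in> {0<..<T}"
      using sub[OF mI] unfolding m_def by blast
    then show ?thesis using feval[OF x] True gB by auto
  next
    case False
    then show ?thesis using feval[OF x] B0 by auto
  qed
  have conv: "(\<lambda>n. f n x) \<longlonglongrightarrow> g x" if x: "x \<in> {0<..<T}" for x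
  proof -
    define m where "m n = nat \<lfloor>x * real (N n) / T\<rfloor>" for n
    define y where "y n = real (m n) * T / real (N n)" for n
    have Ninf: "filterlim (\<lambda>n. real (N n)) at_top sequentially"
      using N filterlim_compose filterlim_real_sequentially by blast
    have ev1: "eventually (\<lambda>n. real (N n) \<ge> T / x) sequentially"
      using Ninf by (simp add: filterlim_at_top)
    have ev2: "eventually (\<lambda>n. real (N n) \<ge> 1) sequentially"
      using Ninf unfolding filterlim_at_top by blast
    have evm: "eventually (\<lambda>n. m n \<in> {1..N n - 1} \<and> x - T / real (N n) < y n \<and> y n \<le> x) sequentially"
      using ev1 ev2
    proof eventually_elim
      case (elim n)
      have xp: "x > 0" "x < T" using x by auto
      have Np: "real (N n) > 0" using elim by auto
      have a: "x * real (N n) / T \<ge> 1" using elim xp T by (auto simp: field_simps)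
      have b: "x * real (N n) / T < real (N n)" using xp T Np by (auto simp: field_simps)
      have fl: "real_of_int \<lfloor>x * real (N n) / T\<rfloor> \<le> x * real (N n) / T"
        "x * real (N n) / T < real_of_int \<lfloor>x * real (N n) / T\<rfloor> + 1" by linarith+
      have fl0: "\<lfloor>x * real (N n) / T\<rfloor> \<ge> 1" using a by linarith
      have rm: "real (m n) = real_of_int \<lfloor>x * real (N n) / T\<rfloor>"
        unfolding m_def using fl0 by simp
      have m1: "m n \<ge> 1" using fl0 unfolding m_def by linarith
      have m2: "real (m n) < real (N n)" using rm fl b by linarith
      hence m3: "m n \<le> N n - 1" by linarith
      have yF: "y n = real_of_int \<lfloor>x * real (N n) / T\<rfloor> * (T / real (N n))"
        unfolding y_def rm by simp
      have TN: "T / real (N n) > 0" using T Np by simp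
      have xx: "(x * real (N n) / T) * (T / real (N n)) = x" using T Np by simp
      have A: "y n \<le> x" unfolding yF
        using mult_right_mono[OF fl(1), of "T / real (N n)"] TN xx by simp
      have B: "(x * real (N n) / T - 1) * (T / real (N n)) < y n" unfolding yF
        using mult_strict_right_mono[of "x * real (N n) / T - 1" _ "T / real (N n)"] fl(2) TN by simp
      have C: "(x * real (N n) / T - 1) * (T / real (N n)) = x - T / real (N n)"
        using xx by (simp only: left_diff_distrib mult_1_left)
      show ?case using A B C m1 m3 by auto
    qed
    have h0: "(\<lambda>n. T / real (N n)) \<longlonglongrightarrow> 0"
      using Ninf by (intro tendsto_divide_0[OF tendsto_const]) (auto simp: filterlim_at_top_imp_at_infinity)
    have "(\<lambda>n. x - T / real (N n)) \<longlonglongrightarrow> x - 0"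
      by (intro tendsto_diff tendsto_const h0)
    hence lo: "(\<lambda>n. x - T / real (N n)) \<longlonglongrightarrow> x" by simp
    have e1: "eventually (\<lambda>n. x - T / real (N n) \<le> y n) sequentially"
      using evm by eventually_elim auto
    have e2: "eventually (\<lambda>n. y n \<le> x) sequentially"
      using evm by eventually_elim auto
    have ylim: "y \<longlonglongrightarrow> x"
      by (rule tendsto_sandwich[OF e1 e2 lo tendsto_const])
    have fe: "f n x = (if m n \<in> {1..N n - 1} then g (y n) else 0)" for n
      unfolding m_def y_def by (rule feval[OF x])
    have cx: "isCont g x" using gc x by (simp add: continuous_on_eq_continuous_at)
    have "(\<lambda>n. g (y n)) \<longlonglongrightarrow> g x" using isCont_tendsto_compose[OF cx ylim] .
    moreover have "eventually (\<lambda>n. g (y n) = f n x) sequentially"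
      using evm by eventually_elim (simp only: fe if_True)
    ultimately show ?thesis by (rule Lim_transform_eventually)
  qed
  have Bint: "(\<lambda>_. B) integrable_on {0<..<T}"
    unfolding integrable_on_open_interval_real by (rule integrable_const_ivl)
  have "(\<lambda>n. integral {0<..<T} (f n)) \<longlonglongrightarrow> integral {0<..<T} g"
    by (rule dominated_convergence(2)[OF fintble Bint fle conv])
  then show ?thesis using fint integral_open_interval_real[of 0 T g] by simp
qed


lemma EV2_eq:
  fixes X :: "real \<Rightarrow> 'a \<Rightarrow> real" and Nn :: nat
  assumes Xm: "\<And>s. s \<in> {0..T} \<Longrightarrow> X s \<in> borel_measurable M"
    and Xi: "\<And>s. s \<in> {0..T} \<Longrightarrow> integrable M (\<lambda>\<omega>. (X s \<omega>)\<^sup>2)"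
    and T: "T > 0" and Nn: "Nn \<ge> 1"
  shows "(\<integral>\<omega>. V2 \<gamma> T Nn X \<omega> \<partial>M) = (\<Sum>k=1..Nn-1. (T / real Nn) *
     ((\<integral>\<omega>. (X (real k * (T / real Nn) + T / real Nn) \<omega> - 2 * X (real k * (T / real Nn)) \<omega>
        + X (real k * (T / real Nn) - T / real Nn) \<omega>)\<^sup>2 \<partial>M) / (T / real Nn) powr (2*\<gamma>)))"
proof -
  define h where "h = T / real Nn"
  have h: "h > 0" using T Nn by (simp add: h_def)
  have Nh: "real Nn * h = T" using Nn by (simp add: h_def)
  define c where "c = (real Nn / T) powr (2 * \<gamma> - 1)"
  have c: "c = h / h powr (2*\<gamma>)"
  proof -
    have "real Nn / T = 1 / h" using T Nn by (simp add: h_def)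
    then have "c = (1/h) powr (2*\<gamma> - 1)" by (simp add: c_def)
    also have "\<dots> = 1 / h powr (2*\<gamma> - 1)" using h by (simp add: powr_divide)
    also have "h powr (2*\<gamma> - 1) = h powr (2*\<gamma>) / h" using h by (simp add: powr_diff)
    finally show ?thesis using h by simp
  qed
  have pts: "real k * h + h \<in> {0..T}" "real k * h \<in> {0..T}" "real k * h - h \<in> {0..T}"
    if k: "k \<in> {1..Nn-1}" for k
  proof -
    have k1: "real k \<ge> 1" "real k + 1 \<le> real Nn" using k by auto
    have "(real k + 1) * h \<le> real Nn * h" using k1 h by (intro mult_right_mono) auto
    then have "real k * h + h \<le> T" using Nh by (simp add: algebra_simps)
    moreover have "h \<le> real k * h" using k1 h by simp
    ultimately show "real k * h + h \<in> {0..T}" "real k * h \<in> {0..T}" "real k * h - h \<in> {0..T}"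
      using h by auto
  qed
  have args: "real (k+1) * T / real Nn = real k * h + h" "real k * T / real Nn = real k * h"
     "real (k-1) * T / real Nn = real k * h - h" if k: "k \<in> {1..Nn-1}" for k
  proof -
    have "real (k - 1) = real k - 1" using k by (simp add: of_nat_diff)
    then show "real (k+1) * T / real Nn = real k * h + h" "real k * T / real Nn = real k * h"
     "real (k-1) * T / real Nn = real k * h - h"
      by (simp_all add: h_def algebra_simps add_divide_distrib diff_divide_distrib)
  qed
  have V: "V2 \<gamma> T Nn X \<omega> = c * (\<Sum>k=1..Nn-1. (X (real k * h + h) \<omega> - 2 * X (real k * h) \<omega>
        + X (real k * h - h) \<omega>)\<^sup>2)" for \<omega>
    unfolding V2_def c_def
  proof (intro arg_cong2[where f="(*)"] refl sum.cong)
    fix k assume k: "k \<in> {1..Nn-1}"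
    show "(X (real (k + 1) * T / real Nn) \<omega> - 2 * X (real k * T / real Nn) \<omega> + X (real (k - 1) * T / real Nn) \<omega>)\<^sup>2
        = (X (real k * h + h) \<omega> - 2 * X (real k * h) \<omega> + X (real k * h - h) \<omega>)\<^sup>2"
      by (simp only: args[OF k])
  qed
  have "(\<integral>\<omega>. V2 \<gamma> T Nn X \<omega> \<partial>M) = c * (\<integral>\<omega>. (\<Sum>k=1..Nn-1. (X (real k * h + h) \<omega> - 2 * X (real k * h) \<omega>
        + X (real k * h - h) \<omega>)\<^sup>2) \<partial>M)"
    unfolding V by (rule integral_mult_right_zero)
  also have "\<dots> = c * (\<Sum>k=1..Nn-1. (\<integral>\<omega>. (X (real k * h + h) \<omega> - 2 * X (real k * h) \<omega>
        + X (real k * h - h) \<omega>)\<^sup>2 \<partial>M))"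
    by (subst Bochner_Integration.integral_sum) (auto intro!: delta_facts(1)[OF Xm Xi] pts)
  also have "\<dots> = (\<Sum>k=1..Nn-1. h * ((\<integral>\<omega>. (X (real k * h + h) \<omega> - 2 * X (real k * h) \<omega>
        + X (real k * h - h) \<omega>)\<^sup>2 \<partial>M) / h powr (2*\<gamma>)))"
    unfolding sum_distrib_left c by (simp add: field_simps)
  finally show ?thesis unfolding h_def .
qed



theorem proposition2:
  fixes M :: "'a measure" and T \<gamma> :: real and N :: "nat \<Rightarrow> nat"
    and X :: "real \<Rightarrow> 'a \<Rightarrow> real" and \<phi> g0 :: "real \<Rightarrow> real"
  assumes "prob_space M"
    and "T > 0"
    and "strict_mono N" and "\<forall>n. N n \<ge> 1"
    and "second_order_process M T X"
    and "0 < \<gamma>" and "\<gamma> < 1"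
    and "cond_C1 M X \<gamma>"
    and "\<phi> \<in> Psi T"
    and "continuous_on {0<..<T} g0" and "bounded (g0 ` {0<..<T})"
    and "\<forall>\<epsilon>>0. eventually (\<lambda>h. \<forall>t. \<phi> h \<le> t \<and> t \<le> T - h \<longrightarrow>
            \<bar>(\<integral>\<omega>. (X (t + h) \<omega> - 2 * X t \<omega> + X (t - h) \<omega>)\<^sup>2 \<partial>M) / h powr (2 * \<gamma>) - g0 t\<bar> \<le> \<epsilon>)
          (at_right 0)"
  shows "(\<lambda>n. \<integral>\<omega>. V2 \<gamma> T (N n) X \<omega> \<partial>M) \<longlonglongrightarrow> integral {0..T} g0"
proof -
  have T: "T > 0" by fact
  from assms(5) have Xm: "\<And>s. s \<in> {0..T} \<Longrightarrow> X s \<in> borel_measurable M"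
    and Xi: "\<And>s. s \<in> {0..T} \<Longrightarrow> integrable M (\<lambda>\<omega>. (X s \<omega>)\<^sup>2)"
    unfolding second_order_process_def by auto
  obtain B where B: "\<And>t. t \<in> {0<..<T} \<Longrightarrow> \<bar>g0 t\<bar> \<le> B"
    using assms(11) unfolding bounded_iff by (auto simp del: greaterThanLessThan_iff)
  have B0: "0 \<le> B" using B[of "T/2"] T by auto
  from assms(9) have phc: "(\<phi> \<longlongrightarrow> 0) (at_right 0)"
    and phL: "filterlim (\<lambda>h. \<phi> h / h) at_top (at_right 0)"
    and phL3: "((\<lambda>h. h * (\<phi> h / h) ^ 3) \<longlongrightarrow> 0) (at_right 0)"
    unfolding Psi_def by auto
  define Q where "Q s = (\<integral>\<omega>. (X s \<omega> - X 0 \<omega>)\<^sup>2 \<partial>M)" for s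
  obtain K \<delta>0 where K: "K > 0" "\<delta>0 > 0"
    and KQ: "\<And>s. 0 \<le> s \<Longrightarrow> s < \<delta>0 \<Longrightarrow> Q s \<le> K\<^sup>2 * s powr (2*\<gamma>)"
  proof -
    from assms(8) obtain K where K: "K > 0"
      "eventually (\<lambda>\<delta>. norm (sigma_X M X 0 \<delta>) \<le> K * norm (\<delta> powr \<gamma>)) (at_right 0)"
      unfolding cond_C1_def by (elim landau_o.bigE)
    then obtain b where b: "b > 0"
      "\<And>y. 0 < y \<Longrightarrow> y < b \<Longrightarrow> norm (sigma_X M X 0 y) \<le> K * norm (y powr \<gamma>)"
      unfolding eventually_at_right_field by auto
    have "Q s \<le> K\<^sup>2 * s powr (2*\<gamma>)" if s: "0 \<le> s" "s < b" for s
    proof (cases "s = 0")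
      case True then show ?thesis by (simp add: Q_def)
    next
      case False
      then have sp: "0 < s" using s by simp
      have Qnn: "Q s \<ge> 0" unfolding Q_def by simp
      have "sqrt (Q s) \<le> K * s powr \<gamma>" using b(2)[OF sp s(2)] by (simp add: sigma_X_def Q_def)
      then have "(sqrt (Q s))\<^sup>2 \<le> (K * s powr \<gamma>)\<^sup>2" by (rule power_mono) (use Qnn in simp)
      also have "(K * s powr \<gamma>)\<^sup>2 = K\<^sup>2 * s powr (2*\<gamma>)"
        using sp by (simp add: power_mult_distrib power2_eq_square powr_add[symmetric])
      finally show ?thesis using Qnn by simp
    qed
    then show ?thesis using that K(1) b(1) by blast
  qed
  define D where "D t h = (\<integral>\<omega>. (X (t + h) \<omega> - 2 * X t \<omega> + X (t - h) \<omega>)\<^sup>2 \<partial>M)" for t h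
  have Dnn: "D t h \<ge> 0" for t h unfolding D_def by simp
  have Dbad: "D t h \<le> 18 * K\<^sup>2 * (t + h) powr (2*\<gamma>)"
    if th: "0 < h" "h \<le> t" "t + h \<le> T" "t + h < \<delta>0" for t h
  proof -
    have pts: "t + h \<in> {0..T}" "t \<in> {0..T}" "t - h \<in> {0..T}" using th by auto
    have "D t h \<le> 3 * (Q (t+h) + 4 * Q t + Q (t - h))"
      unfolding D_def Q_def by (rule delta_facts(2)[OF Xm Xi pts])
    moreover have "Q s \<le> K\<^sup>2 * (t+h) powr (2*\<gamma>)" if "s \<in> {t - h, t, t + h}" for s
    proof -
      have s: "0 \<le> s" "s \<le> t + h" using that th by auto
      have "Q s \<le> K\<^sup>2 * s powr (2*\<gamma>)" using KQ[OF s(1)] s th by auto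
      also have "\<dots> \<le> K\<^sup>2 * (t+h) powr (2*\<gamma>)"
        using s assms(6) by (intro mult_left_mono powr_mono2) auto
      finally show ?thesis .
    qed
    ultimately have a: "D t h \<le> 3 * (Q (t + h) + 4 * Q t + Q (t - h))"
      and q: "\<And>s. s \<in> {t - h, t, t + h} \<Longrightarrow> Q s \<le> K\<^sup>2 * (t + h) powr (2 * \<gamma>)" by blast+
    define P where "P = K\<^sup>2 * (t + h) powr (2 * \<gamma>)"
    have q1: "Q (t + h) \<le> P" "Q t \<le> P" "Q (t - h) \<le> P" unfolding P_def by (auto intro: q)
    have "3 * (Q (t + h) + 4 * Q t + Q (t - h)) \<le> 3 * (P + 4 * P + P)"
      using q1 by (intro mult_left_mono add_mono) auto
    also have "3 * (P + 4 * P + P) = 18 * P" by simp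
    finally have "D t h \<le> 18 * P" using a by (rule order.trans[rotated])
    then show ?thesis by (simp add: P_def mult.assoc)
  qed
  have key: "eventually (\<lambda>h. \<forall>Nn::nat. Nn \<ge> 1 \<longrightarrow> h = T / real Nn \<longrightarrow>
      \<bar>(\<Sum>k=1..Nn-1. h * (D (real k * h) h / h powr (2*\<gamma>))) - (\<Sum>k=1..Nn-1. h * g0 (real k * h))\<bar>
        \<le> (T + 2) * \<epsilon>) (at_right 0)" if \<epsilon>: "\<epsilon> > 0" for \<epsilon>
  proof -
    have e1: "eventually (\<lambda>h. \<forall>t. \<phi> h \<le> t \<and> t \<le> T - h \<longrightarrow> \<bar>D t h / h powr (2*\<gamma>) - g0 t\<bar> \<le> \<epsilon>) (at_right 0)"
      using assms(12) \<epsilon> unfolding D_def by auto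
    have e2: "eventually (\<lambda>h::real. 0 < h) (at_right 0)"
      using eventually_at_right_real[of 0 "1::real", OF zero_less_one] by (rule eventually_mono) auto
    have "((\<lambda>h. \<phi> h + h) \<longlongrightarrow> 0 + 0) (at_right 0)"
      by (intro tendsto_add phc tendsto_ident_at)
    then have e3: "eventually (\<lambda>h. \<phi> h + h < \<delta>0) (at_right 0)"
      using K(2) by (auto dest: order_tendstoD(2))
    have e4: "eventually (\<lambda>h. 1 \<le> \<phi> h / h) (at_right 0)"
      using phL unfolding filterlim_at_top by blast
    have "((\<lambda>h. B * \<phi> h) \<longlongrightarrow> B * 0) (at_right 0)" by (intro tendsto_mult tendsto_const phc)
    then have e5: "eventually (\<lambda>h. B * \<phi> h < \<epsilon>) (at_right 0)"
      using \<epsilon> by (auto dest: order_tendstoD(2))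
    have "((\<lambda>h. 72 * K\<^sup>2 * (h * (\<phi> h / h) ^ 3)) \<longlongrightarrow> 72 * K\<^sup>2 * 0) (at_right 0)"
      by (intro tendsto_mult tendsto_const phL3)
    then have e6: "eventually (\<lambda>h. 72 * K\<^sup>2 * (h * (\<phi> h / h) ^ 3) < \<epsilon>) (at_right 0)"
      using \<epsilon> by (auto dest: order_tendstoD(2))
    show ?thesis using e1 e2 e3 e4 e5 e6
    proof eventually_elim
      case (elim h)
      note H1 = elim(1) and h = elim(2) and H3 = elim(3) and H4 = elim(4) and H5 = elim(5) and H6 = elim(6)
      define L where "L = \<phi> h / h"
      have phiL: "\<phi> h = h * L" using h by (simp add: L_def)
      have L1: "1 \<le> L" using H4 by (simp add: L_def)
      define c where "c = 72 * K\<^sup>2 * h * L\<^sup>2 + h * B"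
      have c0: "c \<ge> 0" using h B0 by (simp add: c_def)
      show ?case
      proof (intro allI impI)
        fix Nn :: nat assume Nn: "Nn \<ge> 1" and hN: "h = T / real Nn"
        have Nh: "real Nn * h = T" using Nn hN by simp
        define I where "I = {1..Nn-1}"
        have tb: "\<bar>h * (D (real k * h) h / h powr (2*\<gamma>)) - h * g0 (real k * h)\<bar>
            \<le> h * \<epsilon> + (if real k * h < \<phi> h then c else 0)" if k: "k \<in> I" for k
        proof -
          define t where "t = real k * h"
          have k1: "real k \<ge> 1" "real k + 1 \<le> real Nn" using k by (auto simp: I_def)
          have "(real k + 1) * h \<le> real Nn * h" using k1 h by (intro mult_right_mono) auto
          then have tT: "t + h \<le> T" using Nh by (simp add: algebra_simps t_def)
          have ht: "h \<le> t" using k1 h by (simp add: t_def)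
          have t0T: "t \<in> {0<..<T}" using tT ht h by auto
          have eq: "\<bar>h * (D t h / h powr (2*\<gamma>)) - h * g0 t\<bar> = h * \<bar>D t h / h powr (2*\<gamma>) - g0 t\<bar>"
            using h by (subst right_diff_distrib[symmetric], subst abs_mult) simp
          show ?thesis
          proof (cases "\<phi> h \<le> t")
            case True
            have "\<bar>D t h / h powr (2*\<gamma>) - g0 t\<bar> \<le> \<epsilon>" using H1 True tT by auto
            then have "h * \<bar>D t h / h powr (2*\<gamma>) - g0 t\<bar> \<le> h * \<epsilon>" using h by (intro mult_left_mono) auto
            then show ?thesis using eq c0 by (auto simp: t_def)
          next
            case False
            then have tl: "t < \<phi> h" by simp
            have th: "t + h < \<delta>0" using tl H3 by simp
            have hp: "h powr (2*\<gamma>) > 0" using h by simp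
            have "D t h \<le> 18 * K\<^sup>2 * (t + h) powr (2*\<gamma>)" using Dbad[OF h ht tT th] .
            also have "\<dots> \<le> 18 * K\<^sup>2 * (\<phi> h + h) powr (2*\<gamma>)"
              using tl ht h assms(6) by (intro mult_left_mono powr_mono2) auto
            finally have D1: "D t h / h powr (2*\<gamma>) \<le> 18 * K\<^sup>2 * ((\<phi> h + h) powr (2*\<gamma>) / h powr (2*\<gamma>))"
              using hp by (simp add: divide_right_mono)
            have "(\<phi> h + h) powr (2*\<gamma>) / h powr (2*\<gamma>) = (L + 1) powr (2*\<gamma>)"
            proof -
              have r: "(\<phi> h + h) / h = L + 1" using h by (simp add: phiL field_simps)
              have "(\<phi> h + h) powr (2*\<gamma>) / h powr (2*\<gamma>) = ((\<phi> h + h) / h) powr (2*\<gamma>)"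
                using h ht tl by (subst powr_divide) auto
              then show ?thesis using r by simp
            qed
            also have "(L + 1) powr (2*\<gamma>) \<le> (L + 1) powr 2"
              using L1 assms(7) by (intro powr_mono) auto
            also have "(L + 1) powr 2 = (L + 1)\<^sup>2" using L1 by (simp add: powr_numeral)
            also have "(L + 1)\<^sup>2 \<le> (2 * L)\<^sup>2" using L1 by (intro power_mono) auto
            also have "(2 * L)\<^sup>2 = 4 * L\<^sup>2" by (simp add: power_mult_distrib)
            finally have pw: "(\<phi> h + h) powr (2*\<gamma>) / h powr (2*\<gamma>) \<le> 4 * L\<^sup>2" .
            have "18 * K\<^sup>2 * ((\<phi> h + h) powr (2*\<gamma>) / h powr (2*\<gamma>)) \<le> 18 * K\<^sup>2 * (4 * L\<^sup>2)"
              by (intro mult_left_mono pw) auto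
            with D1 have Db: "D t h / h powr (2*\<gamma>) \<le> 72 * K\<^sup>2 * L\<^sup>2" by simp
            have "\<bar>D t h / h powr (2*\<gamma>) - g0 t\<bar> \<le> D t h / h powr (2*\<gamma>) + \<bar>g0 t\<bar>"
            proof -
              have "D t h / h powr (2*\<gamma>) \<ge> 0" using Dnn[of t h] hp by simp
              then show ?thesis using abs_triangle_ineq4[of "D t h / h powr (2*\<gamma>)" "g0 t"] by simp
            qed
            also have "\<dots> \<le> 72 * K\<^sup>2 * L\<^sup>2 + B" using Db B[OF t0T] by simp
            finally have "h * \<bar>D t h / h powr (2*\<gamma>) - g0 t\<bar> \<le> h * (72 * K\<^sup>2 * L\<^sup>2 + B)"
              using h by (intro mult_left_mono) auto
            moreover have "h * (72 * K\<^sup>2 * L\<^sup>2 + B) = c" by (simp add: c_def algebra_simps)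
            moreover have "0 \<le> h * \<epsilon>" using h \<epsilon> by simp
            ultimately have G: "\<bar>h * (D t h / h powr (2*\<gamma>)) - h * g0 t\<bar> \<le> h * \<epsilon> + c"
              using eq by linarith
            show ?thesis unfolding t_def[symmetric] using G tl by simp
          qed
        qed
        have "\<bar>(\<Sum>k\<in>I. h * (D (real k * h) h / h powr (2*\<gamma>))) - (\<Sum>k\<in>I. h * g0 (real k * h))\<bar>
            = \<bar>\<Sum>k\<in>I. h * (D (real k * h) h / h powr (2*\<gamma>)) - h * g0 (real k * h)\<bar>"
          by (simp add: sum_subtractf)
        also have "\<dots> \<le> (\<Sum>k\<in>I. \<bar>h * (D (real k * h) h / h powr (2*\<gamma>)) - h * g0 (real k * h)\<bar>)"
          by (rule sum_abs)
        also have "\<dots> \<le> (\<Sum>k\<in>I. h * \<epsilon> + (if real k * h < \<phi> h then c else 0))"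
          by (rule sum_mono) (rule tb)
        also have "\<dots> = real (card I) * (h * \<epsilon>) + real (card {k\<in>I. real k * h < \<phi> h}) * c"
          by (simp add: sum.distrib sum.inter_filter[symmetric] I_def)
        also have "\<dots> \<le> T * \<epsilon> + 2 * \<epsilon>"
        proof (rule add_mono)
          have "real (card I) \<le> real Nn" by (simp add: I_def)
          then have "real (card I) * (h * \<epsilon>) \<le> real Nn * (h * \<epsilon>)"
            using h \<epsilon> by (intro mult_right_mono) auto
          then show "real (card I) * (h * \<epsilon>) \<le> T * \<epsilon>" using Nh by (simp add: mult.assoc[symmetric])
          have sub: "{k\<in>I. real k * h < \<phi> h} \<subseteq> {1..nat \<lfloor>L\<rfloor>}"
          proof
            fix k assume "k \<in> {k\<in>I. real k * h < \<phi> h}"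
            then have k: "k \<ge> 1" "real k * h < h * L" using phiL by (auto simp: I_def)
            then have "real k < L" using h by (simp add: mult.commute)
            then have "k \<le> nat \<lfloor>L\<rfloor>" by linarith
            then show "k \<in> {1..nat \<lfloor>L\<rfloor>}" using k by simp
          qed
          have "card {k\<in>I. real k * h < \<phi> h} \<le> nat \<lfloor>L\<rfloor>"
            using card_mono[OF _ sub] by simp
          then have "real (card {k\<in>I. real k * h < \<phi> h}) \<le> L" using L1 by linarith
          then have "real (card {k\<in>I. real k * h < \<phi> h}) * c \<le> L * c"
            using c0 by (intro mult_right_mono) auto
          also have "L * c = 72 * K\<^sup>2 * (h * (\<phi> h / h) ^ 3) + B * \<phi> h"
            by (simp add: c_def L_def[symmetric] phiL power2_eq_square power3_eq_cube algebra_simps)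
          also have "\<dots> \<le> 2 * \<epsilon>" using H5 H6 by simp
          finally show "real (card {k\<in>I. real k * h < \<phi> h}) * c \<le> 2 * \<epsilon>" .
        qed
        finally show "\<bar>(\<Sum>k=1..Nn-1. h * (D (real k * h) h / h powr (2*\<gamma>))) - (\<Sum>k=1..Nn-1. h * g0 (real k * h))\<bar>
          \<le> (T + 2) * \<epsilon>" by (simp add: I_def algebra_simps)
      qed
    qed
  qed
  have Nmono: "filterlim N sequentially sequentially" using assms(3) by (rule filterlim_subseq)
  have Ninf: "filterlim (\<lambda>n. real (N n)) at_top sequentially"
    using filterlim_compose[OF filterlim_real_sequentially Nmono] .
  have h0: "(\<lambda>n. T / real (N n)) \<longlonglongrightarrow> 0"
    using Ninf by (intro tendsto_divide_0[OF tendsto_const]) (auto simp: filterlim_at_top_imp_at_infinity)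
  have hpos: "eventually (\<lambda>n. T / real (N n) > 0) sequentially"
    using assms(4) T by (intro always_eventually allI) (simp add: Suc_le_eq)
  have hn: "filterlim (\<lambda>n. T / real (N n)) (at_right 0) sequentially"
    by (rule tendsto_imp_filterlim_at_right[OF h0 hpos])
  define A where "A n = (\<integral>\<omega>. V2 \<gamma> T (N n) X \<omega> \<partial>M)" for n
  define G where "G n = (\<Sum>k=1..N n - 1. T / real (N n) * g0 (real k * T / real (N n)))" for n
  have AG: "(\<lambda>n. A n - G n) \<longlonglongrightarrow> 0"
  proof (rule tendstoI)
    fix e :: real assume e: "e > 0"
    define \<epsilon> where "\<epsilon> = e / (T + 3)"
    have \<epsilon>: "\<epsilon> > 0" using e T by (simp add: \<epsilon>_def)
    have "(T + 2) * \<epsilon> < (T + 3) * \<epsilon>" using \<epsilon> by simp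
    also have "(T + 3) * \<epsilon> = e" using T by (simp add: \<epsilon>_def)
    finally have lt: "(T + 2) * \<epsilon> < e" .
    have ev: "eventually (\<lambda>n. \<forall>Nn::nat. Nn \<ge> 1 \<longrightarrow> T / real (N n) = T / real Nn \<longrightarrow>
      \<bar>(\<Sum>k=1..Nn-1. T / real (N n) * (D (real k * (T / real (N n))) (T / real (N n)) / (T / real (N n)) powr (2*\<gamma>)))
         - (\<Sum>k=1..Nn-1. T / real (N n) * g0 (real k * (T / real (N n))))\<bar>
        \<le> (T + 2) * \<epsilon>) sequentially"
      using filterlim_iff[THEN iffD1, OF hn, rule_format, OF key[OF \<epsilon>]] .
    then show "eventually (\<lambda>n. dist (A n - G n) 0 < e) sequentially"
    proof eventually_elim
      case (elim n)
      have N1: "N n \<ge> 1" using assms(4) by simp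
      have b: "\<bar>(\<Sum>k=1..N n-1. T / real (N n) * (D (real k * (T / real (N n))) (T / real (N n)) / (T / real (N n)) powr (2*\<gamma>)))
         - (\<Sum>k=1..N n-1. T / real (N n) * g0 (real k * (T / real (N n))))\<bar> \<le> (T + 2) * \<epsilon>"
        using elim N1 by blast
      have a: "A n = (\<Sum>k=1..N n-1. T / real (N n) * (D (real k * (T / real (N n))) (T / real (N n)) / (T / real (N n)) powr (2*\<gamma>)))"
        unfolding A_def D_def by (rule EV2_eq[OF Xm Xi T N1])
      have g: "G n = (\<Sum>k=1..N n-1. T / real (N n) * g0 (real k * (T / real (N n))))"
        unfolding G_def by simp
      show ?case using a b g lt by (simp add: dist_real_def)
    qed
  qed
  have "G \<longlonglongrightarrow> integral {0..T} g0"
    unfolding G_def by (rule riemann[OF T Nmono assms(10) B])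
  from tendsto_add[OF AG this] have "(\<lambda>n. A n - G n + G n) \<longlonglongrightarrow> 0 + integral {0..T} g0" .
  then show ?thesis unfolding A_def by simp
qed

end
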